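(* Let $G=(V,E,w)$ be a (simple) graph on $n$ vertices and let $z\in\{0,1\}^n$. Let $E_{\mathrm{sat}}=\{\{u,v\}\in E: z_u\neq z_v\}$ and $E_{\mathrm{unsat}}=E\setminus E_{\mathrm{sat}}$. For each qubit $j$ let $P(j)=X_j$ if $z_j=1$ and $P(j)=Y_j$ if $z_j=0$. For $\theta\in\mathbb{R}$ let \[ |\phi(\theta)\rangle=\exp\Big(\sum_{\{j,k\}\in E} i\theta P(j)P(k)\Big)|z\rangle. \] Write $d_j$ for the degree of vertex $j$. If $\{i,j\}\in E_{\mathrm{sat}}$ is contained in exactly $T$ triangles, then \[ \langle\phi(\theta)|2h_{ij}|\phi(\theta)\rangle=1+\sin(2\theta)\cos^{d_i-1}(2\theta)+\sin(2\theta)\cos^{d_j-1}(2\theta)+\frac{1+\cos^T(4\theta)}{2}\cos^{d_i+d_j-2-2T}(2\theta). \] If $\{i,j\}\in E_{\mathrm{unsat}}$ is contained in exactly $T$ triangles, then \[ \langle\phi(\theta)|2h_{ij}|\phi(\theta)\rangle=1-\cos^{d_i+d_j-2-2T}(2\theta). \]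
   Context: Qubits are placed on the vertices, $X_j,Y_j,Z_j$ are Pauli operators on qubit $j$, $|z\rangle$ is the computational basis state, and $h_{ij}=\frac12(I-X_iX_j-Y_iY_j-Z_iZ_j)$. An edge $\{i,j\}$ is contained in exactly $T$ triangles if there are exactly $T$ vertices $k$ with $\{i,k\}\in E$ and $\{j,k\}\in E$. *)

theory Defs
  imports Complex_Main
begin

text \<open>n-qubit states, one qubit per vertex of a finite vertex type 'v.
  A computational basis label is an assignment b :: 'v => bool (True = 1).\<close>

type_synonym 'v state = "('v \<Rightarrow> bool) \<Rightarrow> complex"
type_synonym 'v qop = "'v state \<Rightarrow> 'v state"

definition ket :: "('v \<Rightarrow> bool) \<Rightarrow> 'v state" where
  "ket z = (\<lambda>b. if b = z then 1 else 0)"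

definition flip :: "'v \<Rightarrow> ('v \<Rightarrow> bool) \<Rightarrow> ('v \<Rightarrow> bool)" where
  "flip j b = b(j := \<not> b j)"

text \<open>Pauli operators on qubit j: X|0>=|1>, X|1>=|0>; Y|0>=i|1>, Y|1>=-i|0>;
  Z|0>=|0>, Z|1>=-|1>.\<close>
definition pauliX :: "'v \<Rightarrow> 'v qop" where
  "pauliX j \<psi> = (\<lambda>b. \<psi> (flip j b))"

definition pauliY :: "'v \<Rightarrow> 'v qop" where
  "pauliY j \<psi> = (\<lambda>b. (if b j then \<i> else - \<i>) * \<psi> (flip j b))"

definition pauliZ :: "'v \<Rightarrow> 'v qop" where
  "pauliZ j \<psi> = (\<lambda>b. (if b j then -1 else 1) * \<psi> b)"

definition h_op :: "'v \<Rightarrow> 'v \<Rightarrow> 'v qop" where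
  "h_op i j \<psi> = (\<lambda>b. (\<psi> b - pauliX i (pauliX j \<psi>) b - pauliY i (pauliY j \<psi>) b
                        - pauliZ i (pauliZ j \<psi>) b) / 2)"

definition P_op :: "('v \<Rightarrow> bool) \<Rightarrow> 'v \<Rightarrow> 'v qop" where
  "P_op z j = (if z j then pauliX j else pauliY j)"

text \<open>For an edge e = {j,k}: the operator P(j)P(k) (the two factors commute,
  so the choice of order is immaterial).\<close>
definition edge_op :: "('v \<Rightarrow> bool) \<Rightarrow> 'v set \<Rightarrow> 'v qop" where
  "edge_op z e = (let (j, k) = (SOME (j, k). e = {j, k} \<and> j \<noteq> k) in P_op z j \<circ> P_op z k)"

definition gen_op :: "'v set set \<Rightarrow> ('v \<Rightarrow> bool) \<Rightarrow> real \<Rightarrow> 'v qop" where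
  "gen_op E z \<theta> \<psi> = (\<lambda>b. \<Sum>e\<in>E. \<i> * of_real \<theta> * edge_op z e \<psi> b)"

text \<open>Operator exponential applied to a state, via the (absolutely convergent)
  power series exp(A) psi = sum_k A^k psi / k!.\<close>
definition op_exp_apply :: "'v qop \<Rightarrow> 'v state \<Rightarrow> 'v state" where
  "op_exp_apply A \<psi> = (\<lambda>b. \<Sum>k. (A ^^ k) \<psi> b / of_nat (fact k))"

definition phi :: "'v set set \<Rightarrow> ('v \<Rightarrow> bool) \<Rightarrow> real \<Rightarrow> 'v state" where
  "phi E z \<theta> = op_exp_apply (gen_op E z \<theta>) (ket z)"

definition expval :: "'v state \<Rightarrow> 'v qop \<Rightarrow> complex" where
  "expval \<psi> A = (\<Sum>b\<in>UNIV. cnj (\<psi> b) * A \<psi> b)"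

definition degree :: "'v set set \<Rightarrow> 'v \<Rightarrow> nat" where
  "degree E j = card {k. {j, k} \<in> E}"

definition triangles :: "'v set set \<Rightarrow> 'v \<Rightarrow> 'v \<Rightarrow> nat" where
  "triangles E i j = card {k. {i, k} \<in> E \<and> {j, k} \<in> E}"

definition simple_graph :: "'v set set \<Rightarrow> bool" where
  "simple_graph E \<longleftrightarrow> (\<forall>e\<in>E. card e = 2)"

end

theory Submission
  imports Defs "HOL-Library.FuncSet"
begin

definition sg :: "bool \<Rightarrow> real" where "sg x = (if x then -1 else 1)"
definition chi :: "('v::finite \<Rightarrow> bool) \<Rightarrow> ('v \<Rightarrow> bool) \<Rightarrow> real" where
  "chi T F = (\<Prod>v\<in>UNIV. sg (T v \<and> F v))"
definition xr :: "('v \<Rightarrow> bool) \<Rightarrow> ('v \<Rightarrow> bool) \<Rightarrow> ('v \<Rightarrow> bool)" where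
  "xr F G = (\<lambda>v. F v \<noteq> G v)"
definition ph :: "('v \<Rightarrow> bool) \<Rightarrow> 'v \<Rightarrow> bool \<Rightarrow> complex" where
  "ph z v x = (if z v then 1 else if x then \<i> else - \<i>)"
definition pp :: "('v::finite \<Rightarrow> bool) \<Rightarrow> ('v \<Rightarrow> bool) \<Rightarrow> 'v qop" where
  "pp z F \<psi> b = (\<Prod>v\<in>UNIV. if F v then ph z v (b v) else 1) * \<psi> (xr F b)"
definition Phi :: "('v::finite \<Rightarrow> bool) \<Rightarrow> ('v \<Rightarrow> bool) \<Rightarrow> complex" where
  "Phi z b = (\<Prod>v\<in>UNIV. if b v \<noteq> z v then ph z v (b v) else 1)"
definition psiT :: "('v::finite \<Rightarrow> bool) \<Rightarrow> ('v \<Rightarrow> bool) \<Rightarrow> 'v state" where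
  "psiT z T b = complex_of_real (chi T (xr z b)) * Phi z b"

lemma sumprod:
  fixes f :: "'v::finite \<Rightarrow> 'b::finite \<Rightarrow> 'c::comm_semiring_1"
  shows "(\<Sum>T\<in>UNIV. \<Prod>v\<in>UNIV. f v (T v)) = (\<Prod>v\<in>UNIV. \<Sum>x\<in>UNIV. f v x)"
  by (subst prod_sum_PiE) auto

lemma sum_bool: "(\<Sum>x\<in>UNIV. f x) = f True + f False"
  by (simp add: UNIV_bool add.commute)

lemma chi_orth: "(\<Sum>T\<in>UNIV. chi S T) = (if S = (\<lambda>_. False) then 2 ^ card (UNIV::'v set) else 0)"
  for S :: "'v::finite \<Rightarrow> bool"
proof -
  have "(\<Sum>T\<in>UNIV. chi S T) = (\<Prod>v\<in>UNIV. \<Sum>x\<in>UNIV. sg (S v \<and> x))"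
    unfolding chi_def by (rule sumprod)
  also have "\<dots> = (\<Prod>v\<in>UNIV. if S v then 0 else 2)"
    by (rule prod.cong) (auto simp: sum_bool sg_def)
  also have "\<dots> = (if S = (\<lambda>_. False) then 2 ^ card (UNIV::'v set) else 0)"
  proof (cases "S = (\<lambda>_. False)")
    case True then show ?thesis by simp
  next
    case False then obtain v where "S v" by auto
    then show ?thesis using False by (auto intro: prod_zero)
  qed
  finally show ?thesis .
qed

lemma chi_sym: "chi T F = chi F T"
  unfolding chi_def by (rule prod.cong) (auto simp: conj_commute)

lemma chi_xr: "chi T (xr F G) = chi T F * chi T G"
  unfolding chi_def xr_def prod.distrib[symmetric]
  by (rule prod.cong) (auto simp: sg_def)

lemma chi_xr1: "chi (xr F G) T = chi F T * chi G T"
  using chi_xr chi_sym by metis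

lemma pp_comp: "pp z F (pp z G \<psi>) = pp z (xr F G) \<psi>"
proof (rule ext)
  fix b
  have x: "xr G (xr F b) = xr (xr F G) b" by (auto simp: xr_def)
  have "(\<Prod>v\<in>UNIV. if F v then ph z v (b v) else 1) * (\<Prod>v\<in>UNIV. if G v then ph z v (xr F b v) else 1)
     = (\<Prod>v\<in>UNIV. if xr F G v then ph z v (b v) else 1)"
    unfolding prod.distrib[symmetric]
    by (rule prod.cong) (auto simp: xr_def ph_def)
  then show "pp z F (pp z G \<psi>) b = pp z (xr F G) \<psi> b"
    unfolding pp_def x by (simp add: mult.assoc)
qed

lemma P_op_pp: "P_op z v = pp z (\<lambda>u. u = v)"
proof (intro ext)
  fix \<psi> b
  have p: "(\<Prod>u\<in>UNIV. if u = v then ph z u (b u) else 1) = ph z v (b v)"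
    by (subst prod.If_cases) auto
  have f: "xr (\<lambda>u. u = v) b = flip v b" by (auto simp: xr_def flip_def fun_eq_iff)
  show "P_op z v \<psi> b = pp z (\<lambda>u. u = v) \<psi> b"
    unfolding pp_def p f by (auto simp: P_op_def pauliX_def pauliY_def ph_def)
qed

lemma edge_op_pp:
  assumes "card e = 2"
  shows "edge_op z e = pp z (\<lambda>v. v \<in> e)"
proof -
  obtain a c where e: "e = {a, c}" "a \<noteq> c" using assms by (auto simp: card_2_iff)
  define p where "p = (SOME (j, k). e = {j, k} \<and> j \<noteq> k)"
  have "\<exists>q. (case q of (j, k) \<Rightarrow> e = {j, k} \<and> j \<noteq> k)" using e by auto
  then have "(case p of (j, k) \<Rightarrow> e = {j, k} \<and> j \<noteq> k)" unfolding p_def by (rule someI_ex)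
  then obtain j k where p: "p = (j, k)" "e = {j, k}" "j \<noteq> k" by (cases p) auto
  have "edge_op z e = (case p of (j, k) \<Rightarrow> P_op z j \<circ> P_op z k)"
    unfolding edge_op_def p_def Let_def ..
  also have "\<dots> = P_op z j \<circ> P_op z k" using p(1) by simp
  also have "\<dots> = pp z (xr (\<lambda>u. u = j) (\<lambda>u. u = k))"
    by (auto simp: P_op_pp pp_comp)
  also have "xr (\<lambda>u. u = j) (\<lambda>u. u = k) = (\<lambda>v. v \<in> e)"
    using p by (auto simp: xr_def)
  finally show ?thesis .
qed

lemma pp_psiT: "pp z G (psiT z T) = (\<lambda>b. complex_of_real (chi T G) * psiT z T b)"
proof (rule ext)
  fix b
  have x: "xr z (xr G b) = xr G (xr z b)" by (auto simp: xr_def)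
  have "(\<Prod>v\<in>UNIV. if G v then ph z v (b v) else 1) * Phi z (xr G b) = Phi z b"
    unfolding Phi_def prod.distrib[symmetric]
    by (rule prod.cong) (auto simp: xr_def ph_def)
  then show "pp z G (psiT z T) b = complex_of_real (chi T G) * psiT z T b"
    unfolding pp_def psiT_def x chi_xr
    by (simp add: algebra_simps)
qed

lemma pp_sum: "pp z F (\<lambda>b. \<Sum>t\<in>S. f t b) b = (\<Sum>t\<in>S. pp z F (f t) b)"
  by (simp add: pp_def sum_distrib_left)

lemma pp_scale: "pp z F (\<lambda>b. c * f b) b = c * pp z F f b"
  by (simp add: pp_def)

definition lam :: "'v::finite set set \<Rightarrow> ('v \<Rightarrow> bool) \<Rightarrow> real" where
  "lam E T = (\<Sum>e\<in>E. chi T (\<lambda>v. v \<in> e))"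

lemma gen_comb:
  assumes sg: "simple_graph E"
  shows "gen_op E z \<theta> (\<lambda>b. \<Sum>T\<in>UNIV. d T * psiT z T b)
       = (\<lambda>b. \<Sum>T\<in>UNIV. (d T * (\<i> * of_real \<theta> * of_real (lam E T))) * psiT z T b)"
proof (rule ext)
  fix b
  have "gen_op E z \<theta> (\<lambda>b. \<Sum>T\<in>UNIV. d T * psiT z T b) b
      = (\<Sum>e\<in>E. \<i> * of_real \<theta> * (\<Sum>T\<in>UNIV. d T * (of_real (chi T (\<lambda>v. v \<in> e)) * psiT z T b)))"
    unfolding gen_op_def
  proof (rule sum.cong[OF refl])
    fix e assume "e \<in> E"
    then have "card e = 2" using sg by (auto simp: simple_graph_def)
    then show "\<i> * of_real \<theta> * edge_op z e (\<lambda>b. \<Sum>T\<in>UNIV. d T * psiT z T b) b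
       = \<i> * of_real \<theta> * (\<Sum>T\<in>UNIV. d T * (of_real (chi T (\<lambda>v. v \<in> e)) * psiT z T b))"
      by (simp add: edge_op_pp pp_sum pp_scale pp_psiT)
  qed
  also have "\<dots> = (\<Sum>T\<in>UNIV. (d T * (\<i> * of_real \<theta> * of_real (lam E T))) * psiT z T b)"
    unfolding lam_def of_real_sum sum_distrib_left sum_distrib_right
    by (subst sum.swap) (auto intro!: sum.cong simp: algebra_simps)
  finally show "gen_op E z \<theta> (\<lambda>b. \<Sum>T\<in>UNIV. d T * psiT z T b) b
       = (\<Sum>T\<in>UNIV. (d T * (\<i> * of_real \<theta> * of_real (lam E T))) * psiT z T b)" .
qed

lemma gen_pow:
  assumes sg: "simple_graph E"
  shows "(gen_op E z \<theta> ^^ k) (\<lambda>b. \<Sum>T\<in>UNIV. d T * psiT z T b)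
       = (\<lambda>b. \<Sum>T\<in>UNIV. (d T * (\<i> * of_real \<theta> * of_real (lam E T)) ^ k) * psiT z T b)"
proof (induction k)
  case 0 then show ?case by simp
next
  case (Suc k)
  let ?c = "\<lambda>T. \<i> * of_real \<theta> * of_real (lam E T)"
  have "(gen_op E z \<theta> ^^ Suc k) (\<lambda>b. \<Sum>T\<in>UNIV. d T * psiT z T b)
      = gen_op E z \<theta> (\<lambda>b. \<Sum>T\<in>UNIV. (d T * ?c T ^ k) * psiT z T b)"
    by (simp add: Suc.IH)
  also have "\<dots> = (\<lambda>b. \<Sum>T\<in>UNIV. ((d T * ?c T ^ k) * ?c T) * psiT z T b)"
    by (rule gen_comb[OF sg])
  also have "\<dots> = (\<lambda>b. \<Sum>T\<in>UNIV. (d T * ?c T ^ Suc k) * psiT z T b)"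
    by (simp add: ac_simps)
  finally show ?case .
qed

lemma ket_decomp:
  "ket z = (\<lambda>b. \<Sum>T\<in>UNIV. (1 / 2 ^ card (UNIV::'v set)) * psiT z T b)"
  for z :: "'v::finite \<Rightarrow> bool"
proof (rule ext)
  fix b :: "'v \<Rightarrow> bool"
  have "(\<Sum>T\<in>UNIV. psiT z T b) = Phi z b * of_real (\<Sum>T\<in>UNIV. chi T (xr z b))"
    unfolding psiT_def of_real_sum sum_distrib_left by (simp add: mult.commute)
  also have "(\<Sum>T\<in>UNIV. chi T (xr z b)) = (\<Sum>T\<in>UNIV. chi (xr z b) T)"
    by (simp add: chi_sym)
  also have "\<dots> = (if b = z then 2 ^ card (UNIV::'v set) else 0)"
    unfolding chi_orth by (auto simp: xr_def fun_eq_iff)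
  finally have "(\<Sum>T\<in>UNIV. psiT z T b) = (if b = z then 2 ^ card (UNIV::'v set) else 0)"
    by (auto simp: Phi_def)
  then show "ket z b = (\<Sum>T\<in>UNIV. (1 / 2 ^ card (UNIV::'v set)) * psiT z T b)"
    by (simp add: ket_def sum_divide_distrib[symmetric])
qed

lemma phi_eq:
  fixes z :: "'v::finite \<Rightarrow> bool"
  assumes sg: "simple_graph E"
  shows "phi E z \<theta> b = (\<Sum>T\<in>UNIV. (1 / 2 ^ card (UNIV::'v set)) *
           exp (\<i> * of_real \<theta> * of_real (lam E T)) * psiT z T b)"
proof -
  let ?N = "1 / 2 ^ card (UNIV::'v set) :: complex"
  have "(\<lambda>k. (gen_op E z \<theta> ^^ k) (ket z) b / of_nat (fact k))
     = (\<lambda>k. \<Sum>T\<in>UNIV. ?N * psiT z T b * ((\<i> * of_real \<theta> * of_real (lam E T)) ^ k / fact k))"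
    unfolding ket_decomp gen_pow[OF sg] sum_divide_distrib
    by (auto intro!: ext sum.cong simp: algebra_simps)
  moreover have "(\<lambda>k. \<Sum>T\<in>UNIV. ?N * psiT z T b * ((\<i> * of_real \<theta> * of_real (lam E T)) ^ k / fact k))
     sums (\<Sum>T\<in>UNIV. ?N * psiT z T b * exp (\<i> * of_real \<theta> * of_real (lam E T)))"
  proof (rule sums_sum)
    fix T
    show "(\<lambda>k. ?N * psiT z T b * ((\<i> * of_real \<theta> * of_real (lam E T)) ^ k / fact k))
       sums (?N * psiT z T b * exp (\<i> * of_real \<theta> * of_real (lam E T)))"
      by (rule sums_mult) (use exp_converges[of "\<i> * of_real \<theta> * of_real (lam E T)"] in
         \<open>simp add: scaleR_conv_of_real divide_inverse mult.commute\<close>)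
  qed
  ultimately show ?thesis
    unfolding phi_def op_exp_apply_def
    by (simp add: sums_unique[symmetric] algebra_simps)
qed

lemma chi_orth2: "(\<Sum>b\<in>UNIV. chi S (xr z b)) = (if S = (\<lambda>_. False) then 2 ^ card (UNIV::'v set) else 0)"
  for S :: "'v::finite \<Rightarrow> bool"
proof -
  have "(\<Sum>b\<in>UNIV. chi S (xr z b)) = (\<Prod>v\<in>UNIV. \<Sum>x\<in>UNIV. sg (S v \<and> (z v \<noteq> x)))"
    unfolding chi_def xr_def by (rule sumprod)
  also have "\<dots> = (\<Prod>v\<in>UNIV. if S v then 0 else 2)"
    by (rule prod.cong) (auto simp: sum_bool sg_def)
  also have "\<dots> = (if S = (\<lambda>_. False) then 2 ^ card (UNIV::'v set) else 0)"
  proof (cases "S = (\<lambda>_. False)")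
    case True then show ?thesis by simp
  next
    case False then obtain v where "S v" by auto
    then show ?thesis using False by (auto intro: prod_zero)
  qed
  finally show ?thesis .
qed

lemma cnj_psiT: "cnj (psiT z T b) = of_real (chi T (xr z b)) * cnj (Phi z b)"
  by (simp add: psiT_def)

lemma swap3: "(\<Sum>b\<in>A. \<Sum>T\<in>B. \<Sum>T'\<in>C. g b T T') = (\<Sum>T\<in>B. \<Sum>T'\<in>C. \<Sum>b\<in>A. g b T T')"
proof -
  have "(\<Sum>b\<in>A. \<Sum>T\<in>B. \<Sum>T'\<in>C. g b T T') = (\<Sum>T\<in>B. \<Sum>b\<in>A. \<Sum>T'\<in>C. g b T T')"
    by (rule sum.swap)
  also have "\<dots> = (\<Sum>T\<in>B. \<Sum>T'\<in>C. \<Sum>b\<in>A. g b T T')"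
    by (rule sum.cong[OF refl], rule sum.swap)
  finally show ?thesis .
qed

lemma parseval:
  fixes z :: "'v::finite \<Rightarrow> bool" and f :: "'v state"
  assumes loc: "\<And>b. cnj (Phi z b) * L b * Phi z (xr H b) = \<kappa> * of_real (chi \<tau> (xr z b))"
    and fd: "\<And>b. f b = (\<Sum>T\<in>UNIV. a T * psiT z T b)"
  shows "(\<Sum>b\<in>UNIV. cnj (f b) * (L b * f (xr H b)))
       = \<kappa> * 2 ^ card (UNIV::'v set) * (\<Sum>T\<in>UNIV. cnj (a T) * a (xr T \<tau>) * of_real (chi (xr T \<tau>) H))"
proof -
  let ?N = "2 ^ card (UNIV::'v set) :: real"
  have xz: "xr z (xr H b) = xr H (xr z b)" for b by (auto simp: xr_def)
  have xx: "xr (xr T T') \<tau> = (\<lambda>_. False) \<longleftrightarrow> T' = xr T \<tau>" for T T' :: "'v \<Rightarrow> bool"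
    by (auto simp: xr_def fun_eq_iff)
  have trm: "cnj (psiT z T b) * (L b * psiT z T' (xr H b))
       = \<kappa> * of_real (chi T' H) * of_real (chi (xr (xr T T') \<tau>) (xr z b))" for T T' b
  proof -
    have "cnj (psiT z T b) * (L b * psiT z T' (xr H b))
        = of_real (chi T (xr z b)) * of_real (chi T' H) * of_real (chi T' (xr z b)) *
          (cnj (Phi z b) * L b * Phi z (xr H b))"
      unfolding cnj_psiT psiT_def xz chi_xr by (simp add: ac_simps)
    also have "\<dots> = \<kappa> * of_real (chi T' H) * of_real (chi (xr (xr T T') \<tau>) (xr z b))"
      unfolding loc chi_xr1 by (simp add: ac_simps)
    finally show ?thesis .
  qed
  have "(\<Sum>b\<in>UNIV. cnj (f b) * (L b * f (xr H b)))
      = (\<Sum>b\<in>UNIV. \<Sum>T\<in>UNIV. \<Sum>T'\<in>UNIV. cnj (a T) * a T' *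
            (\<kappa> * of_real (chi T' H) * of_real (chi (xr (xr T T') \<tau>) (xr z b))))"
  proof (intro sum.cong refl)
    fix b
    have "cnj (f b) * (L b * f (xr H b)) = (\<Sum>T\<in>UNIV. \<Sum>T'\<in>UNIV.
       cnj (a T) * a T' * (cnj (psiT z T b) * (L b * psiT z T' (xr H b))))"
      unfolding fd cnj_sum sum_distrib_left[of "L b"] sum_product
      by (intro sum.cong refl) (simp add: ac_simps)
    then show "cnj (f b) * (L b * f (xr H b)) = (\<Sum>T\<in>UNIV. \<Sum>T'\<in>UNIV. cnj (a T) * a T' *
            (\<kappa> * of_real (chi T' H) * of_real (chi (xr (xr T T') \<tau>) (xr z b))))"
      by (simp add: trm)
  qed
  also have "\<dots> = (\<Sum>T\<in>UNIV. \<Sum>T'\<in>UNIV. cnj (a T) * a T' * \<kappa> * of_real (chi T' H) *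
            of_real (\<Sum>b\<in>UNIV. chi (xr (xr T T') \<tau>) (xr z b)))"
    apply (subst swap3) by (intro sum.cong refl) (simp add: of_real_sum sum_distrib_left ac_simps)
  also have "\<dots> = (\<Sum>T\<in>UNIV. \<Sum>T'\<in>UNIV. if T' = xr T \<tau> then
          cnj (a T) * a T' * \<kappa> * of_real (chi T' H) * of_real ?N else 0)"
    unfolding chi_orth2 xx by (intro sum.cong refl) auto
  also have "\<dots> = (\<Sum>T\<in>UNIV. cnj (a T) * a (xr T \<tau>) * \<kappa> * of_real (chi (xr T \<tau>) H) * of_real ?N)"
    by (simp add: sum.delta)
  also have "\<dots> = \<kappa> * 2 ^ card (UNIV::'v set) * (\<Sum>T\<in>UNIV. cnj (a T) * a (xr T \<tau>) * of_real (chi (xr T \<tau>) H))"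
    by (simp add: sum_distrib_left ac_simps)
  finally show ?thesis .
qed

lemma pin2:
  fixes i j :: "'v::finite" and A :: "bool \<Rightarrow> bool \<Rightarrow> complex"
    and B :: "bool \<Rightarrow> bool \<Rightarrow> 'v \<Rightarrow> bool \<Rightarrow> complex"
  assumes ij: "i \<noteq> j"
  shows "(\<Sum>T\<in>UNIV. A (T i) (T j) * (\<Prod>k\<in>UNIV-{i,j}. B (T i) (T j) k (T k)))
       = (\<Sum>a\<in>UNIV. \<Sum>b\<in>UNIV. A a b * (\<Prod>k\<in>UNIV-{i,j}. \<Sum>x\<in>UNIV. B a b k x))"
    (is "?L = ?R")
proof -
  have fix_ab: "(\<Sum>T\<in>UNIV. if T i = a \<and> T j = b then (\<Prod>k\<in>UNIV-{i,j}. B a b k (T k)) else 0)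
      = (\<Prod>k\<in>UNIV-{i,j}. \<Sum>x\<in>UNIV. B a b k x)" for a b
  proof -
    define h where "h v x = (if v = i then (if x = a then 1 else 0) else if v = j then (if x = b then 1 else 0) else B a b v x)" for v x
    have W: "UNIV - {i} - {j} = UNIV - {i, j}" by auto
    have pr: "(\<Prod>v\<in>UNIV. g v) = g i * (g j * (\<Prod>k\<in>UNIV-{i,j}. g k))" for g :: "'v \<Rightarrow> complex"
      using ij by (simp add: prod.remove[of UNIV i] prod.remove[of "UNIV - {i}" j] W)
    have "(\<Sum>T\<in>UNIV. if T i = a \<and> T j = b then (\<Prod>k\<in>UNIV-{i,j}. B a b k (T k)) else 0)
        = (\<Sum>T\<in>UNIV. \<Prod>v\<in>UNIV. h v (T v))"
    proof (rule sum.cong[OF refl])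
      fix T :: "'v \<Rightarrow> bool"
      have "(\<Prod>k\<in>UNIV-{i,j}. h k (T k)) = (\<Prod>k\<in>UNIV-{i,j}. B a b k (T k))"
        by (rule prod.cong) (auto simp: h_def)
      then show "(if T i = a \<and> T j = b then (\<Prod>k\<in>UNIV-{i,j}. B a b k (T k)) else 0)
          = (\<Prod>v\<in>UNIV. h v (T v))"
        unfolding pr[of "\<lambda>v. h v (T v)"] using ij by (simp add: h_def)
    qed
    also have "\<dots> = (\<Prod>v\<in>UNIV. \<Sum>x\<in>UNIV. h v x)" by (rule sumprod)
    also have "\<dots> = (\<Prod>k\<in>UNIV-{i,j}. \<Sum>x\<in>UNIV. B a b k x)"
    proof -
      have "(\<Prod>k\<in>UNIV-{i,j}. \<Sum>x\<in>UNIV. h k x) = (\<Prod>k\<in>UNIV-{i,j}. \<Sum>x\<in>UNIV. B a b k x)"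
        by (rule prod.cong) (auto simp: h_def)
      then show ?thesis
        unfolding pr[of "\<lambda>v. \<Sum>x\<in>UNIV. h v x"] using ij by (simp add: h_def sum_bool)
    qed
    finally show ?thesis .
  qed
  have "?L = (\<Sum>T\<in>UNIV. \<Sum>a\<in>UNIV. \<Sum>b\<in>UNIV. if T i = a \<and> T j = b then
          A a b * (\<Prod>k\<in>UNIV-{i,j}. B a b k (T k)) else 0)"
    by (intro sum.cong refl) (simp add: sum_bool)
  also have "\<dots> = (\<Sum>a\<in>UNIV. \<Sum>b\<in>UNIV. \<Sum>T\<in>UNIV. if T i = a \<and> T j = b then
          A a b * (\<Prod>k\<in>UNIV-{i,j}. B a b k (T k)) else 0)"
    by (rule swap3)
  also have "\<dots> = ?R"
  proof (intro sum.cong refl)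
    fix a b
    have "(\<Sum>T\<in>UNIV. if T i = a \<and> T j = b then A a b * (\<Prod>k\<in>UNIV-{i,j}. B a b k (T k)) else 0)
        = A a b * (\<Sum>T\<in>UNIV. if T i = a \<and> T j = b then (\<Prod>k\<in>UNIV-{i,j}. B a b k (T k)) else 0)"
      unfolding sum_distrib_left by (intro sum.cong refl) auto
    then show "(\<Sum>T\<in>UNIV. if T i = a \<and> T j = b then A a b * (\<Prod>k\<in>UNIV-{i,j}. B a b k (T k)) else 0)
        = A a b * (\<Prod>k\<in>UNIV-{i,j}. \<Sum>x\<in>UNIV. B a b k x)"
      by (simp add: fix_ab)
  qed
  finally show ?thesis .
qed

lemma edge_prod:
  fixes E :: "'v::finite set set" and g :: "'v set \<Rightarrow> complex"
  assumes sgE: "simple_graph E" and ijE: "{i, j} \<in> E"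
    and g1: "\<And>e. e \<in> E \<Longrightarrow> i \<notin> e \<Longrightarrow> j \<notin> e \<Longrightarrow> g e = 1"
  shows "(\<Prod>e\<in>E. g e) = g {i, j} * (\<Prod>k\<in>UNIV-{i,j}.
           (if {i, k} \<in> E then g {i, k} else 1) * (if {j, k} \<in> E then g {j, k} else 1))"
proof -
  have card2: "card e = 2" if "e \<in> E" for e using sgE that by (auto simp: simple_graph_def)
  have ij: "i \<noteq> j" using card2[OF ijE] by auto
  have noloop: "{v} \<notin> E" for v using card2 by fastforce
  define Ki where "Ki = {k \<in> UNIV-{i,j}. {i, k} \<in> E}"
  define Kj where "Kj = {k \<in> UNIV-{i,j}. {j, k} \<in> E}"
  define E' where "E' = insert {i, j} ((\<lambda>k. {i, k}) ` Ki \<union> (\<lambda>k. {j, k}) ` Kj)"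
  have fin: "finite E" by simp
  have sub: "E' \<subseteq> E" using ijE by (auto simp: E'_def Ki_def Kj_def)
  have rest: "g e = 1" if "e \<in> E - E'" for e
  proof -
    have eE: "e \<in> E" and nE': "e \<notin> E'" using that by auto
    obtain x y where e: "e = {x, y}" "x \<noteq> y" using card2[OF eE] by (auto simp: card_2_iff)
    show ?thesis
    proof (cases "i \<in> e \<or> j \<in> e")
      case False then show ?thesis using g1 eE by auto
    next
      case True
      then show ?thesis using nE' eE e ij
        by (auto simp: E'_def Ki_def Kj_def insert_commute doubleton_eq_iff)
    qed
  qed
  have "(\<Prod>e\<in>E. g e) = (\<Prod>e\<in>E'. g e)"
    using rest sub by (intro prod.mono_neutral_right) auto
  also have "\<dots> = g {i, j} * ((\<Prod>e\<in>(\<lambda>k. {i, k}) ` Ki. g e) * (\<Prod>e\<in>(\<lambda>k. {j, k}) ` Kj. g e))"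
  proof -
    have n1: "{i, j} \<notin> (\<lambda>k. {i, k}) ` Ki \<union> (\<lambda>k. {j, k}) ` Kj"
      using ij by (auto simp: Ki_def Kj_def doubleton_eq_iff)
    have d: "(\<lambda>k. {i, k}) ` Ki \<inter> (\<lambda>k. {j, k}) ` Kj = {}"
      using ij by (auto simp: Ki_def Kj_def doubleton_eq_iff)
    show ?thesis unfolding E'_def using n1 d
      by (simp add: prod.union_disjoint)
  qed
  also have "(\<Prod>e\<in>(\<lambda>k. {i, k}) ` Ki. g e) = (\<Prod>k\<in>Ki. g {i, k})"
    by (rule prod.reindex_cong[where l="\<lambda>k. {i, k}"]) (auto simp: inj_on_def doubleton_eq_iff)
  also have "(\<Prod>e\<in>(\<lambda>k. {j, k}) ` Kj. g e) = (\<Prod>k\<in>Kj. g {j, k})"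
    by (rule prod.reindex_cong[where l="\<lambda>k. {j, k}"]) (auto simp: inj_on_def doubleton_eq_iff)
  also have "(\<Prod>k\<in>Ki. g {i, k}) = (\<Prod>k\<in>UNIV-{i,j}. if {i, k} \<in> E then g {i, k} else 1)"
    unfolding Ki_def by (rule prod.inter_filter) simp
  also have "(\<Prod>k\<in>Kj. g {j, k}) = (\<Prod>k\<in>UNIV-{i,j}. if {j, k} \<in> E then g {j, k} else 1)"
    unfolding Kj_def by (rule prod.inter_filter) simp
  finally show ?thesis by (simp add: prod.distrib)
qed

lemma prod_UNIV2:
  fixes g :: "'v::finite \<Rightarrow> 'c::comm_monoid_mult"
  assumes "i \<noteq> j"
  shows "(\<Prod>v\<in>UNIV. g v) = g i * (g j * (\<Prod>k\<in>UNIV-{i,j}. g k))"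
proof -
  have W: "UNIV - {i} - {j} = UNIV - {i, j}" by auto
  show ?thesis using assms by (simp add: prod.remove[of UNIV i] prod.remove[of "UNIV - {i}" j] W)
qed

lemma chi_two:
  fixes H S :: "'v::finite \<Rightarrow> bool"
  assumes "i \<noteq> j" "\<And>v. H v \<Longrightarrow> v = i \<or> v = j"
  shows "chi S H = sg (S i \<and> H i) * sg (S j \<and> H j)"
proof -
  have "(\<Prod>k\<in>UNIV-{i,j}. sg (S k \<and> H k)) = 1"
    using assms(2) by (intro prod.neutral) (auto simp: sg_def)
  then show ?thesis unfolding chi_def prod_UNIV2[OF assms(1)] by simp
qed

lemma chi_pair:
  assumes "a \<noteq> c"
  shows "chi T (\<lambda>v. v \<in> {a, c}) = sg (T a) * sg (T c)"
  using chi_two[OF assms, of "\<lambda>v. v \<in> {a, c}" T] by simp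

lemma chi_pair':
  assumes "a \<noteq> c"
  shows "chi T (\<lambda>v. v = a \<or> v = c) = sg (T a) * sg (T c)"
  using chi_pair[OF assms, of T] by simp

lemma expi: "exp (\<i> * complex_of_real t) = complex_of_real (cos t) + \<i> * complex_of_real (sin t)"
  by (simp add: complex_eq_iff Re_exp Im_exp)

lemma cnj_expi: "cnj (exp (\<i> * complex_of_real t)) = exp (\<i> * complex_of_real (- t))"
  unfolding expi[of t] expi[of "-t"] by simp

definition uh :: "'v::finite set set \<Rightarrow> real \<Rightarrow> ('v \<Rightarrow> bool) \<Rightarrow> complex" where
  "uh E \<theta> T = exp (\<i> * complex_of_real (\<theta> * lam E T))"

definition ua :: "'v set set \<Rightarrow> ('v \<Rightarrow> bool) \<Rightarrow> 'v \<Rightarrow> 'v \<Rightarrow> bool \<Rightarrow> bool \<Rightarrow> 'v \<Rightarrow> real" where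
  "ua E \<tau> i j a b k = (if {i, k} \<in> E then sg a * (sg (\<tau> i) - 1) else 0)
                     + (if {j, k} \<in> E then sg b * (sg (\<tau> j) - 1) else 0)"

lemma Rs_gen:
  fixes E :: "'v::finite set set" and \<tau> H :: "'v \<Rightarrow> bool"
  assumes sgE: "simple_graph E" and ijE: "{i, j} \<in> E"
    and tau: "\<And>v. \<tau> v \<Longrightarrow> v = i \<or> v = j" and Hs: "\<And>v. H v \<Longrightarrow> v = i \<or> v = j"
  shows "(\<Sum>T\<in>UNIV. cnj (uh E \<theta> T) * uh E \<theta> (xr T \<tau>) * of_real (chi (xr T \<tau>) H))
    = (\<Sum>a\<in>UNIV. \<Sum>b\<in>UNIV. (of_real (sg ((a \<noteq> \<tau> i) \<and> H i) * sg ((b \<noteq> \<tau> j) \<and> H j))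
         * exp (\<i> * of_real (\<theta> * (sg a * sg b * (sg (\<tau> i) * sg (\<tau> j) - 1)))))
         * (\<Prod>k\<in>UNIV-{i,j}. \<Sum>x\<in>UNIV. exp (\<i> * of_real (\<theta> * (sg x * ua E \<tau> i j a b k)))))"
proof -
  have card2: "card e = 2" if "e \<in> E" for e using sgE that by (auto simp: simple_graph_def)
  have ij: "i \<noteq> j" using card2[OF ijE] by auto
  let ?g = "\<lambda>T e. exp (\<i> * of_real (\<theta> * (chi T (\<lambda>v. v \<in> e) * (chi \<tau> (\<lambda>v. v \<in> e) - 1))))"
  have tau1: "chi \<tau> (\<lambda>v. v \<in> e) = 1" if "i \<notin> e" "j \<notin> e" for e
    unfolding chi_def using tau that by (intro prod.neutral) (auto simp: sg_def)
  have step: "cnj (uh E \<theta> T) * uh E \<theta> (xr T \<tau>) * of_real (chi (xr T \<tau>) H)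
     = (of_real (sg ((T i \<noteq> \<tau> i) \<and> H i) * sg ((T j \<noteq> \<tau> j) \<and> H j))
         * exp (\<i> * of_real (\<theta> * (sg (T i) * sg (T j) * (sg (\<tau> i) * sg (\<tau> j) - 1)))))
       * (\<Prod>k\<in>UNIV-{i,j}. exp (\<i> * of_real (\<theta> * (sg (T k) * ua E \<tau> i j (T i) (T j) k))))" for T
  proof -
    have "lam E (xr T \<tau>) - lam E T = (\<Sum>e\<in>E. chi T (\<lambda>v. v \<in> e) * (chi \<tau> (\<lambda>v. v \<in> e) - 1))"
      unfolding lam_def chi_xr1 sum_subtractf[symmetric] by (simp add: algebra_simps)
    then have arg: "\<i> * of_real (- (\<theta> * lam E T)) + \<i> * of_real (\<theta> * lam E (xr T \<tau>))
        = (\<Sum>e\<in>E. \<i> * of_real (\<theta> * (chi T (\<lambda>v. v \<in> e) * (chi \<tau> (\<lambda>v. v \<in> e) - 1))))"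
    proof -
      assume d: "lam E (xr T \<tau>) - lam E T = (\<Sum>e\<in>E. chi T (\<lambda>v. v \<in> e) * (chi \<tau> (\<lambda>v. v \<in> e) - 1))"
      have "\<i> * of_real (- (\<theta> * lam E T)) + \<i> * of_real (\<theta> * lam E (xr T \<tau>))
          = \<i> * of_real (\<theta> * (lam E (xr T \<tau>) - lam E T))" by (simp add: algebra_simps)
      also have "\<dots> = (\<Sum>e\<in>E. \<i> * of_real (\<theta> * (chi T (\<lambda>v. v \<in> e) * (chi \<tau> (\<lambda>v. v \<in> e) - 1))))"
        unfolding d by (simp add: sum_distrib_left)
      finally show ?thesis .
    qed
    have "cnj (uh E \<theta> T) * uh E \<theta> (xr T \<tau>) = exp (\<Sum>e\<in>E. \<i> * of_real (\<theta> * (chi T (\<lambda>v. v \<in> e) * (chi \<tau> (\<lambda>v. v \<in> e) - 1))))"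
      unfolding uh_def cnj_expi exp_add[symmetric] arg ..
    also have "\<dots> = (\<Prod>e\<in>E. ?g T e)" by (simp add: exp_sum)
    also have "\<dots> = ?g T {i, j} * (\<Prod>k\<in>UNIV-{i,j}.
           (if {i, k} \<in> E then ?g T {i, k} else 1) * (if {j, k} \<in> E then ?g T {j, k} else 1))"
      by (rule edge_prod[OF sgE ijE]) (simp add: tau1)
    also have "?g T {i, j} = exp (\<i> * of_real (\<theta> * (sg (T i) * sg (T j) * (sg (\<tau> i) * sg (\<tau> j) - 1))))"
      by (simp only: chi_pair[OF ij])
    also have "(\<Prod>k\<in>UNIV-{i,j}. (if {i, k} \<in> E then ?g T {i, k} else 1) * (if {j, k} \<in> E then ?g T {j, k} else 1))
        = (\<Prod>k\<in>UNIV-{i,j}. exp (\<i> * of_real (\<theta> * (sg (T k) * ua E \<tau> i j (T i) (T j) k))))"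
    proof (rule prod.cong[OF refl])
      fix k assume k: "k \<in> UNIV - {i, j}"
      have tk: "\<not> \<tau> k" using tau k by auto
      have ci: "chi T (\<lambda>v. v \<in> {i, k}) = sg (T i) * sg (T k)" "chi \<tau> (\<lambda>v. v \<in> {i, k}) = sg (\<tau> i)"
        "chi T (\<lambda>v. v \<in> {j, k}) = sg (T j) * sg (T k)" "chi \<tau> (\<lambda>v. v \<in> {j, k}) = sg (\<tau> j)"
        using k tk by (auto simp: chi_pair' sg_def)
      show "(if {i, k} \<in> E then ?g T {i, k} else 1) * (if {j, k} \<in> E then ?g T {j, k} else 1)
          = exp (\<i> * of_real (\<theta> * (sg (T k) * ua E \<tau> i j (T i) (T j) k)))"
        unfolding ci ua_def by (simp add: exp_add[symmetric] algebra_simps)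
    qed
    finally have A: "cnj (uh E \<theta> T) * uh E \<theta> (xr T \<tau>) = exp (\<i> * of_real (\<theta> * (sg (T i) * sg (T j) * (sg (\<tau> i) * sg (\<tau> j) - 1))))
       * (\<Prod>k\<in>UNIV-{i,j}. exp (\<i> * of_real (\<theta> * (sg (T k) * ua E \<tau> i j (T i) (T j) k))))" .
    have B: "chi (xr T \<tau>) H = sg ((T i \<noteq> \<tau> i) \<and> H i) * sg ((T j \<noteq> \<tau> j) \<and> H j)"
      using chi_two[OF ij Hs] by (simp add: xr_def)
    show ?thesis unfolding A B by (simp add: ac_simps)
  qed
  show ?thesis unfolding step by (rule pin2[OF ij])
qed

lemma sum_x_exp: "(\<Sum>x\<in>UNIV. exp (\<i> * complex_of_real (\<theta> * (sg x * u)))) = complex_of_real (2 * cos (\<theta> * u))"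
  unfolding sum_bool expi by (simp add: sg_def)

definition Qv :: "'v::finite set set \<Rightarrow> real \<Rightarrow> ('v \<Rightarrow> bool) \<Rightarrow> ('v \<Rightarrow> bool) \<Rightarrow> 'v \<Rightarrow> 'v \<Rightarrow> complex" where
  "Qv E \<theta> \<tau> H i j = (\<Sum>a\<in>UNIV. \<Sum>b\<in>UNIV. (of_real (sg ((a \<noteq> \<tau> i) \<and> H i) * sg ((b \<noteq> \<tau> j) \<and> H j))
         * exp (\<i> * of_real (\<theta> * (sg a * sg b * (sg (\<tau> i) * sg (\<tau> j) - 1)))))
         * of_real (\<Prod>k\<in>UNIV-{i,j}. cos (\<theta> * ua E \<tau> i j a b k)))"

lemma S_eval:
  fixes E :: "'v::finite set set" and \<tau> H :: "'v \<Rightarrow> bool"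
  assumes sgE: "simple_graph E" and ijE: "{i, j} \<in> E"
    and tau: "\<And>v. \<tau> v \<Longrightarrow> v = i \<or> v = j" and Hs: "\<And>v. H v \<Longrightarrow> v = i \<or> v = j"
    and loc: "\<And>b. cnj (Phi z b) * L b * Phi z (xr H b) = \<kappa> * of_real (chi \<tau> (xr z b))"
  shows "(\<Sum>b\<in>UNIV. cnj (phi E z \<theta> b) * (L b * phi E z \<theta> (xr H b))) = \<kappa> / 4 * Qv E \<theta> \<tau> H i j"
proof -
  have card2: "card e = 2" if "e \<in> E" for e using sgE that by (auto simp: simple_graph_def)
  have ij: "i \<noteq> j" using card2[OF ijE] by auto
  let ?W = "UNIV - {i, j} :: 'v set"
  let ?n = "card (UNIV :: 'v set)"
  have cW: "card ?W = ?n - 2" using ij by (simp add: card_Diff_subset)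
  have n2: "2 \<le> ?n" using ij card_mono[of UNIV "{i, j}"] by simp
  have N4: "(2::complex) ^ ?n = 4 * 2 ^ card ?W"
  proof -
    have "?n = card ?W + 2" using cW n2 by simp
    then show ?thesis by (simp add: power_add)
  qed
  define a where "a T = (1 / 2 ^ ?n) * uh E \<theta> T" for T
  have fd: "phi E z \<theta> b = (\<Sum>T\<in>UNIV. a T * psiT z T b)" for b
    unfolding phi_eq[OF sgE] a_def uh_def by (simp add: ac_simps)
  have "(\<Sum>b\<in>UNIV. cnj (phi E z \<theta> b) * (L b * phi E z \<theta> (xr H b)))
      = \<kappa> * 2 ^ ?n * (\<Sum>T\<in>UNIV. cnj (a T) * a (xr T \<tau>) * of_real (chi (xr T \<tau>) H))"
    by (rule parseval[OF loc fd])
  also have "(\<Sum>T\<in>UNIV. cnj (a T) * a (xr T \<tau>) * of_real (chi (xr T \<tau>) H))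
      = (1 / 2 ^ ?n) * (1 / 2 ^ ?n) * (\<Sum>T\<in>UNIV. cnj (uh E \<theta> T) * uh E \<theta> (xr T \<tau>) * of_real (chi (xr T \<tau>) H))"
    unfolding a_def sum_distrib_left by (intro sum.cong refl) (simp add: ac_simps)
  also have "(\<Sum>T\<in>UNIV. cnj (uh E \<theta> T) * uh E \<theta> (xr T \<tau>) * of_real (chi (xr T \<tau>) H))
    = (\<Sum>a\<in>UNIV. \<Sum>b\<in>UNIV. (of_real (sg ((a \<noteq> \<tau> i) \<and> H i) * sg ((b \<noteq> \<tau> j) \<and> H j))
         * exp (\<i> * of_real (\<theta> * (sg a * sg b * (sg (\<tau> i) * sg (\<tau> j) - 1)))))
         * (\<Prod>k\<in>UNIV-{i,j}. \<Sum>x\<in>UNIV. exp (\<i> * of_real (\<theta> * (sg x * ua E \<tau> i j a b k)))))"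
    by (rule Rs_gen[OF sgE ijE tau Hs])
  also have "\<dots> = 2 ^ card ?W * Qv E \<theta> \<tau> H i j"
    unfolding sum_x_exp Qv_def sum_distrib_left
    by (intro sum.cong refl) (simp add: prod.distrib ac_simps)
  finally show ?thesis unfolding N4 by (simp add: field_simps)
qed

lemma prod_if1: "finite W \<Longrightarrow> (\<Prod>k\<in>W. if R k then c else 1) = c ^ card {k \<in> W. R k}"
  by (simp add: prod.inter_filter[symmetric])

lemma class_prod:
  fixes f :: "bool \<Rightarrow> bool \<Rightarrow> real"
  assumes "finite W"
  shows "(\<Prod>k\<in>W. f (P k) (Q k)) = f True True ^ card {k \<in> W. P k \<and> Q k} * f True False ^ card {k \<in> W. P k \<and> \<not> Q k}
     * f False True ^ card {k \<in> W. \<not> P k \<and> Q k} * f False False ^ card {k \<in> W. \<not> P k \<and> \<not> Q k}"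
proof -
  have "(\<Prod>k\<in>W. f (P k) (Q k)) = (\<Prod>k\<in>W. (if P k \<and> Q k then f True True else 1) * (if P k \<and> \<not> Q k then f True False else 1)
     * (if \<not> P k \<and> Q k then f False True else 1) * (if \<not> P k \<and> \<not> Q k then f False False else 1))"
    by (rule prod.cong) auto
  then show ?thesis unfolding prod.distrib prod_if1[OF assms] .
qed

definition cT :: "'v::finite set set \<Rightarrow> 'v \<Rightarrow> 'v \<Rightarrow> nat" where
  "cT E i j = card {k \<in> UNIV-{i,j}. {i, k} \<in> E \<and> {j, k} \<in> E}"
definition ci :: "'v::finite set set \<Rightarrow> 'v \<Rightarrow> 'v \<Rightarrow> nat" where
  "ci E i j = card {k \<in> UNIV-{i,j}. {i, k} \<in> E \<and> \<not> {j, k} \<in> E}"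
definition cj :: "'v::finite set set \<Rightarrow> 'v \<Rightarrow> 'v \<Rightarrow> nat" where
  "cj E i j = card {k \<in> UNIV-{i,j}. \<not> {i, k} \<in> E \<and> {j, k} \<in> E}"

lemma Qv_form:
  "Qv E \<theta> \<tau> H i j = (\<Sum>a\<in>UNIV. \<Sum>b\<in>UNIV. of_real (sg ((a \<noteq> \<tau> i) \<and> H i) * sg ((b \<noteq> \<tau> j) \<and> H j))
         * exp (\<i> * of_real (\<theta> * (sg a * sg b * (sg (\<tau> i) * sg (\<tau> j) - 1))))
         * of_real (cos (\<theta> * (sg a * (sg (\<tau> i) - 1) + sg b * (sg (\<tau> j) - 1))) ^ cT E i j
              * cos (\<theta> * (sg a * (sg (\<tau> i) - 1))) ^ ci E i j * cos (\<theta> * (sg b * (sg (\<tau> j) - 1))) ^ cj E i j))"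
proof -
  have "(\<Prod>k\<in>UNIV-{i,j}. cos (\<theta> * ua E \<tau> i j a b k))
     = cos (\<theta> * (sg a * (sg (\<tau> i) - 1) + sg b * (sg (\<tau> j) - 1))) ^ cT E i j
              * cos (\<theta> * (sg a * (sg (\<tau> i) - 1))) ^ ci E i j * cos (\<theta> * (sg b * (sg (\<tau> j) - 1))) ^ cj E i j" for a b
    unfolding ua_def cT_def ci_def cj_def
    using class_prod[of "UNIV-{i,j}" "\<lambda>p q. cos (\<theta> * ((if p then sg a * (sg (\<tau> i) - 1) else 0) + (if q then sg b * (sg (\<tau> j) - 1) else 0)))"
        "\<lambda>k. {i, k} \<in> E" "\<lambda>k. {j, k} \<in> E"]
    by simp
  then show ?thesis unfolding Qv_def by simp
qed

lemma Q00: "Qv E \<theta> (\<lambda>_. False) (\<lambda>_. False) i j = 4"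
  unfolding Qv_form by (simp add: sum_bool sg_def)

lemma Q0H: "Qv E \<theta> (\<lambda>_. False) (\<lambda>v. v = i \<or> v = j) i j = 0"
  unfolding Qv_form by (simp add: sum_bool sg_def)

lemma QiH: "i \<noteq> j \<Longrightarrow> Qv E \<theta> (\<lambda>v. v = i) (\<lambda>v. v = i \<or> v = j) i j
   = 4 * \<i> * of_real (sin (2 * \<theta>) * cos (2 * \<theta>) ^ (cT E i j + ci E i j))"
  unfolding Qv_form expi by (simp add: sum_bool sg_def power_add algebra_simps)

lemma QjH: "i \<noteq> j \<Longrightarrow> Qv E \<theta> (\<lambda>v. v = j) (\<lambda>v. v = i \<or> v = j) i j
   = 4 * \<i> * of_real (sin (2 * \<theta>) * cos (2 * \<theta>) ^ (cT E i j + cj E i j))"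
  unfolding Qv_form expi by (simp add: sum_bool sg_def power_add algebra_simps)

lemma QijH: "i \<noteq> j \<Longrightarrow> Qv E \<theta> (\<lambda>v. v = i \<or> v = j) (\<lambda>v. v = i \<or> v = j) i j
   = 2 * of_real ((cos (4 * \<theta>) ^ cT E i j - 1) * cos (2 * \<theta>) ^ (ci E i j + cj E i j))"
  unfolding Qv_form expi by (simp add: sum_bool sg_def power_add algebra_simps)

lemma Qij0: "i \<noteq> j \<Longrightarrow> Qv E \<theta> (\<lambda>v. v = i \<or> v = j) (\<lambda>_. False) i j
   = 2 * of_real ((cos (4 * \<theta>) ^ cT E i j + 1) * cos (2 * \<theta>) ^ (ci E i j + cj E i j))"
  unfolding Qv_form expi by (simp add: sum_bool sg_def power_add algebra_simps)

lemma loc_gen: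
  fixes \<Lambda> :: "'v::finite \<Rightarrow> bool \<Rightarrow> complex" and k :: "'v \<Rightarrow> complex"
  assumes "\<And>v x. cnj (if x \<noteq> z v then ph z v x else 1) * \<Lambda> v x
      * (if (H v \<noteq> x) \<noteq> z v then ph z v (H v \<noteq> x) else 1) = k v * of_real (sg (\<tau> v \<and> (z v \<noteq> x)))"
  shows "cnj (Phi z b) * (\<Prod>v\<in>UNIV. \<Lambda> v (b v)) * Phi z (xr H b) = (\<Prod>v\<in>UNIV. k v) * of_real (chi \<tau> (xr z b))"
  unfolding Phi_def chi_def xr_def cnj_prod of_real_prod prod.distrib[symmetric]
  by (rule prod.cong[OF refl]) (use assms in simp)

lemma deg_i:
  assumes sgE: "simple_graph E" and ijE: "{i, j} \<in> E"
  shows "degree E i = 1 + cT E i j + ci E i j" "degree E j = 1 + cT E i j + cj E i j"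
    "triangles E i j = cT E i j"
proof -
  have card2: "card e = 2" if "e \<in> E" for e using sgE that by (auto simp: simple_graph_def)
  have ij: "i \<noteq> j" using card2[OF ijE] by auto
  have noloop: "{v} \<notin> E" for v using card2 by fastforce
  have jiE: "{j, i} \<in> E" using ijE by (simp add: insert_commute)
  have s1: "{k. {i, k} \<in> E} = insert j ({k \<in> UNIV-{i,j}. {i, k} \<in> E \<and> {j, k} \<in> E} \<union> {k \<in> UNIV-{i,j}. {i, k} \<in> E \<and> \<not> {j, k} \<in> E})"
    using ijE noloop by auto
  have s2: "{k. {j, k} \<in> E} = insert i ({k \<in> UNIV-{i,j}. {i, k} \<in> E \<and> {j, k} \<in> E} \<union> {k \<in> UNIV-{i,j}. \<not> {i, k} \<in> E \<and> {j, k} \<in> E})"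
    using jiE noloop by auto
  have s3: "{k. {i, k} \<in> E \<and> {j, k} \<in> E} = {k \<in> UNIV-{i,j}. {i, k} \<in> E \<and> {j, k} \<in> E}"
    using noloop by (auto simp: insert_commute)
  show "degree E i = 1 + cT E i j + ci E i j"
    unfolding degree_def s1 cT_def ci_def
    apply (subst card_insert_disjoint, simp, simp)
    apply (subst card_Un_disjoint, auto)
    done
  show "degree E j = 1 + cT E i j + cj E i j"
    unfolding degree_def s2 cT_def cj_def
    apply (subst card_insert_disjoint, simp, simp)
    apply (subst card_Un_disjoint, auto)
    done
  show "triangles E i j = cT E i j"
    unfolding triangles_def s3 cT_def ..
qed

theorem lemma3:
  fixes E :: "('v::finite) set set" and z :: "'v \<Rightarrow> bool" and \<theta> :: real
    and i j :: 'v and T :: nat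
  assumes "simple_graph E"
    and "{i, j} \<in> E"
    and "triangles E i j = T"
  shows "(z i \<noteq> z j \<longrightarrow>
           expval (phi E z \<theta>) (\<lambda>\<psi> b. 2 * h_op i j \<psi> b)
           = complex_of_real (1 + sin (2*\<theta>) * cos (2*\<theta>) ^ (degree E i - 1)
               + sin (2*\<theta>) * cos (2*\<theta>) ^ (degree E j - 1)
               + (1 + cos (4*\<theta>) ^ T) / 2
                 * cos (2*\<theta>) ^ (degree E i + degree E j - 2 - 2*T)))
       \<and> (z i = z j \<longrightarrow>
           expval (phi E z \<theta>) (\<lambda>\<psi> b. 2 * h_op i j \<psi> b)
           = complex_of_real (1 - cos (2*\<theta>) ^ (degree E i + degree E j - 2 - 2*T)))"
proof -
  note sgE = assms(1) and ijE = assms(2)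
  have card2: "card e = 2" if "e \<in> E" for e using sgE that by (auto simp: simple_graph_def)
  have ij: "i \<noteq> j" using card2[OF ijE] by auto
  define Hij where "Hij = (\<lambda>v::'v. v = i \<or> v = j)"
  define Z0 where "Z0 = (\<lambda>v::'v. False)"
  define \<Lambda>Y where "\<Lambda>Y v x = (if v = i \<or> v = j then (if x then \<i> else - \<i>) else 1)" for v x
  define \<Lambda>Z where "\<Lambda>Z v x = (if v = i \<or> v = j then (if x then -1 else 1) else (1::complex))" for v x
  define kX where "kX v = (if (v = i \<or> v = j) \<and> \<not> z v then \<i> else 1)" for v
  define kY where "kY v = (if (v = i \<or> v = j) \<and> z v then \<i> else 1)" for v
  define kZ where "kZ v = (if (v = i \<or> v = j) \<and> z v then -1 else (1::complex))" for v
  define \<tau>X where "\<tau>X = (\<lambda>v. (v = i \<or> v = j) \<and> \<not> z v)"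
  define \<tau>Y where "\<tau>Y = (\<lambda>v. (v = i \<or> v = j) \<and> z v)"
  let ?\<phi> = "phi E z \<theta>"
  have xr0: "xr Z0 b = b" for b by (simp add: xr_def Z0_def)
  have mX: "pauliX i (pauliX j \<psi>) b = \<psi> (xr Hij b)" for \<psi> b
  proof -
    have "flip j (flip i b) = xr Hij b" using ij by (auto simp: flip_def xr_def Hij_def fun_eq_iff)
    then show ?thesis by (simp add: pauliX_def)
  qed
  have pY: "(\<Prod>v\<in>UNIV. \<Lambda>Y v (b v)) = (if b i then \<i> else - \<i>) * (if b j then \<i> else - \<i>)" for b
    unfolding prod_UNIV2[OF ij] using ij by (simp add: \<Lambda>Y_def)
  have pZ: "(\<Prod>v\<in>UNIV. \<Lambda>Z v (b v)) = (if b i then -1 else 1) * (if b j then -1 else 1)" for b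
    unfolding prod_UNIV2[OF ij] using ij by (simp add: \<Lambda>Z_def)
  have mY: "pauliY i (pauliY j \<psi>) b = (\<Prod>v\<in>UNIV. \<Lambda>Y v (b v)) * \<psi> (xr Hij b)" for \<psi> b
  proof -
    have "flip j (flip i b) = xr Hij b" using ij by (auto simp: flip_def xr_def Hij_def fun_eq_iff)
    moreover have "flip i b j = b j" using ij by (simp add: flip_def)
    ultimately show ?thesis unfolding pY by (simp add: pauliY_def)
  qed
  have mZ: "pauliZ i (pauliZ j \<psi>) b = (\<Prod>v\<in>UNIV. \<Lambda>Z v (b v)) * \<psi> (xr Z0 b)" for \<psi> b
    unfolding pZ xr0 by (simp add: pauliZ_def)
  have tI: "\<And>v. \<tau>X v \<Longrightarrow> v = i \<or> v = j" "\<And>v. \<tau>Y v \<Longrightarrow> v = i \<or> v = j"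
     "\<And>v. Hij v \<Longrightarrow> v = i \<or> v = j" "\<And>v. Z0 v \<Longrightarrow> v = i \<or> v = j"
    by (auto simp: \<tau>X_def \<tau>Y_def Hij_def Z0_def)
  have locI: "cnj (Phi z b) * 1 * Phi z (xr Z0 b) = 1 * of_real (chi Z0 (xr z b))" for b
    using loc_gen[where \<Lambda>="\<lambda>_ _. 1" and k="\<lambda>_. 1" and H=Z0 and \<tau>=Z0 and z=z and b=b]
    by (simp add: Z0_def ph_def sg_def)
  have locX: "cnj (Phi z b) * 1 * Phi z (xr Hij b) = (kX i * kX j) * of_real (chi \<tau>X (xr z b))" for b
  proof -
    have "cnj (Phi z b) * (\<Prod>v\<in>(UNIV::'v set). (1::complex)) * Phi z (xr Hij b) = (\<Prod>v\<in>UNIV. kX v) * of_real (chi \<tau>X (xr z b))"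
      by (rule loc_gen[where \<Lambda>="\<lambda>_ _. 1"]) (auto simp: Hij_def kX_def \<tau>X_def ph_def sg_def)
    then show ?thesis unfolding prod_UNIV2[OF ij, of kX] using ij by (simp add: kX_def)
  qed
  have locY: "cnj (Phi z b) * (\<Prod>v\<in>UNIV. \<Lambda>Y v (b v)) * Phi z (xr Hij b) = (kY i * kY j) * of_real (chi \<tau>Y (xr z b))" for b
  proof -
    have "cnj (Phi z b) * (\<Prod>v\<in>UNIV. \<Lambda>Y v (b v)) * Phi z (xr Hij b) = (\<Prod>v\<in>UNIV. kY v) * of_real (chi \<tau>Y (xr z b))"
      by (rule loc_gen) (auto simp: Hij_def kY_def \<tau>Y_def \<Lambda>Y_def ph_def sg_def)
    then show ?thesis unfolding prod_UNIV2[OF ij, of kY] using ij by (simp add: kY_def)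
  qed
  have locZ: "cnj (Phi z b) * (\<Prod>v\<in>UNIV. \<Lambda>Z v (b v)) * Phi z (xr Z0 b) = (kZ i * kZ j) * of_real (chi Hij (xr z b))" for b
  proof -
    have "cnj (Phi z b) * (\<Prod>v\<in>UNIV. \<Lambda>Z v (b v)) * Phi z (xr Z0 b) = (\<Prod>v\<in>UNIV. kZ v) * of_real (chi Hij (xr z b))"
      by (rule loc_gen) (auto simp: Hij_def kZ_def Z0_def \<Lambda>Z_def ph_def sg_def)
    then show ?thesis unfolding prod_UNIV2[OF ij, of kZ] using ij by (simp add: kZ_def)
  qed
  have SI: "(\<Sum>b\<in>UNIV. cnj (?\<phi> b) * (1 * ?\<phi> (xr Z0 b))) = 1 / 4 * Qv E \<theta> Z0 Z0 i j"
    by (rule S_eval[OF sgE ijE tI(4) tI(4) locI])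
  have SX: "(\<Sum>b\<in>UNIV. cnj (?\<phi> b) * (1 * ?\<phi> (xr Hij b))) = (kX i * kX j) / 4 * Qv E \<theta> \<tau>X Hij i j"
    by (rule S_eval[OF sgE ijE tI(1) tI(3) locX])
  have SY: "(\<Sum>b\<in>UNIV. cnj (?\<phi> b) * ((\<Prod>v\<in>UNIV. \<Lambda>Y v (b v)) * ?\<phi> (xr Hij b))) = (kY i * kY j) / 4 * Qv E \<theta> \<tau>Y Hij i j"
    by (rule S_eval[OF sgE ijE tI(2) tI(3) locY])
  have SZ: "(\<Sum>b\<in>UNIV. cnj (?\<phi> b) * ((\<Prod>v\<in>UNIV. \<Lambda>Z v (b v)) * ?\<phi> (xr Z0 b))) = (kZ i * kZ j) / 4 * Qv E \<theta> Hij Z0 i j"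
    by (rule S_eval[OF sgE ijE tI(3) tI(4) locZ])
  have ev: "expval ?\<phi> (\<lambda>\<psi> b. 2 * h_op i j \<psi> b) =
     (\<Sum>b\<in>UNIV. cnj (?\<phi> b) * (1 * ?\<phi> (xr Z0 b))) - (\<Sum>b\<in>UNIV. cnj (?\<phi> b) * (1 * ?\<phi> (xr Hij b)))
     - (\<Sum>b\<in>UNIV. cnj (?\<phi> b) * ((\<Prod>v\<in>UNIV. \<Lambda>Y v (b v)) * ?\<phi> (xr Hij b)))
     - (\<Sum>b\<in>UNIV. cnj (?\<phi> b) * ((\<Prod>v\<in>UNIV. \<Lambda>Z v (b v)) * ?\<phi> (xr Z0 b)))"
    unfolding expval_def h_op_def sum_subtractf[symmetric]
    by (intro sum.cong refl) (simp only: mX mY mZ xr0, simp add: field_simps)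
  have ev2: "expval ?\<phi> (\<lambda>\<psi> b. 2 * h_op i j \<psi> b) = 1 / 4 * Qv E \<theta> Z0 Z0 i j
     - (kX i * kX j) / 4 * Qv E \<theta> \<tau>X Hij i j - (kY i * kY j) / 4 * Qv E \<theta> \<tau>Y Hij i j
     - (kZ i * kZ j) / 4 * Qv E \<theta> Hij Z0 i j"
    unfolding ev SI SX SY SZ ..
  note D = deg_i[OF sgE ijE]
  have TT: "T = cT E i j" using assms(3) D(3) by simp
  note Qs = Q00[of E \<theta> i j] Q0H[of E \<theta> i j] QiH[OF ij] QjH[OF ij] QijH[OF ij] Qij0[OF ij]
  show ?thesis
  proof (cases "z i"; cases "z j")
    assume zi: "z i" and zj: "z j"
    have m: "\<tau>X = Z0" "\<tau>Y = Hij" using zi zj by (auto simp: \<tau>X_def \<tau>Y_def Z0_def Hij_def fun_eq_iff)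
    show ?thesis using zi zj unfolding ev2 m
      by (simp add: Qs[unfolded Z0_def[symmetric] Hij_def[symmetric]] kX_def kY_def kZ_def D TT power_add algebra_simps)
  next
    assume zi: "z i" and zj: "\<not> z j"
    have m: "\<tau>X = (\<lambda>v. v = j)" "\<tau>Y = (\<lambda>v. v = i)" using zi zj ij by (auto simp: \<tau>X_def \<tau>Y_def fun_eq_iff)
    show ?thesis using zi zj unfolding ev2 m
      by (simp add: Qs[unfolded Z0_def[symmetric] Hij_def[symmetric]] kX_def kY_def kZ_def D TT power_add algebra_simps)
  next
    assume zi: "\<not> z i" and zj: "z j"
    have m: "\<tau>X = (\<lambda>v. v = i)" "\<tau>Y = (\<lambda>v. v = j)" using zi zj ij by (auto simp: \<tau>X_def \<tau>Y_def fun_eq_iff)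
    show ?thesis using zi zj unfolding ev2 m
      by (simp add: Qs[unfolded Z0_def[symmetric] Hij_def[symmetric]] kX_def kY_def kZ_def D TT power_add algebra_simps)
  next
    assume zi: "\<not> z i" and zj: "\<not> z j"
    have m: "\<tau>X = Hij" "\<tau>Y = Z0" using zi zj by (auto simp: \<tau>X_def \<tau>Y_def Z0_def Hij_def fun_eq_iff)
    show ?thesis using zi zj unfolding ev2 m
      by (simp add: Qs[unfolded Z0_def[symmetric] Hij_def[symmetric]] kX_def kY_def kZ_def D TT power_add algebra_simps)
  qed
qed

end
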